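(* Let $C_n^\sigma=(C_n,\sigma)$, $n\ge 3$, be a compatible signed cycle. Then $\dim(C_n^\sigma)=1$ if and only if there exists a vertex $u$ such that $d^{\pm}(u)=0$ (i.e. the two edges at $u$ have opposite signs) and, for every $k\in\{1,2,\dots,\lfloor n/2\rfloor\}$ and all distinct $v,w\in N_k(u)$, one has $\sigma(uv)\neq\sigma(uw)$.
   Context: A signed graph $\Sigma=(G,\sigma)$ consists of a finite simple connected graph $G=(V,E)$ and a signature $\sigma:E\to\{+1,-1\}$. For vertices $u,v$, $d(u,v)$ denotes the usual distance in $G$; the sign of a path $P$ is $\sigma(P)=\prod_{e\in P}\sigma(e)$. Set $\sigma_{\max}(uv)=-1$ if every shortest $u$–$v$ path has sign $-1$, and $\sigma_{\max}(uv)=+1$ otherwise; set $\sigma_{\min}(uv)=+1$ if every shortest $u$–$v$ path has sign $+1$, and $\sigma_{\min}(uv)=-1$ otherwise. $\Sigma$ is (distance) compatible if $\sigma_{\max}(uv)d(u,v)=\sigma_{\min}(uv)d(u,v)$ for all vertices $u,v$; in that case the signed distance is $d_\Sigma(u,v)=\sigma_{\max}(uv)\,d(u,v)$, and $\sigma(uv)$ denotes the common value $\sigma_{\max}(uv)=\sigma_{\min}(uv)$ (for an edge $uv$ this is its edge sign). $d^+(v)$ and $d^-(v)$ are the numbers of positive and negative edges at $v$, and $d^\pm(v)=d^+(v)-d^-(v)$ is the net-degree. The open $k$-neighbourhood of $v$ is $N_k(v)=\{u: d_\Sigma(u,v)=\pm k\}$, i.e. the vertices at distance $k$ from $v$. For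 a compatible $\Sigma$ and an ordered subset $W=(w_1,\dots,w_k)$ of $V$, the metric representation of $v\in V$ is $r_\Sigma(v|W)=(d_\Sigma(v,w_1),\dots,d_\Sigma(v,w_k))$. $W$ is a resolving set of $\Sigma$ if $r_\Sigma(u|W)\neq r_\Sigma(v|W)$ for all distinct $u,v\in V$; a basis is a resolving set of minimum cardinality, and that cardinality is the metric dimension $\dim(\Sigma)$. *)

theory Defs
  imports Main
begin

text \<open>A signed graph is given by a vertex set V, a symmetric adjacency relation E
  and a signature sg, where sg u v is the sign (+1 or -1) of the edge uv.\<close>

definition is_walk :: "'a set \<Rightarrow> ('a \<Rightarrow> 'a \<Rightarrow> bool) \<Rightarrow> 'a \<Rightarrow> 'a \<Rightarrow> 'a list \<Rightarrow> bool" where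
  "is_walk V E u v xs \<longleftrightarrow> xs \<noteq> [] \<and> hd xs = u \<and> last xs = v \<and> set xs \<subseteq> V \<and>
     (\<forall>i. Suc i < length xs \<longrightarrow> E (xs ! i) (xs ! Suc i))"

definition walk_sign :: "('a \<Rightarrow> 'a \<Rightarrow> int) \<Rightarrow> 'a list \<Rightarrow> int" where
  "walk_sign sg xs = prod_list (map (\<lambda>(a, b). sg a b) (zip xs (tl xs)))"

definition gdist :: "'a set \<Rightarrow> ('a \<Rightarrow> 'a \<Rightarrow> bool) \<Rightarrow> 'a \<Rightarrow> 'a \<Rightarrow> nat" where
  "gdist V E u v = (LEAST k. \<exists>xs. is_walk V E u v xs \<and> length xs = Suc k)"

definition shortest_paths :: "'a set \<Rightarrow> ('a \<Rightarrow> 'a \<Rightarrow> bool) \<Rightarrow> 'a \<Rightarrow> 'a \<Rightarrow> 'a list set" where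
  "shortest_paths V E u v = {xs. is_walk V E u v xs \<and> length xs = Suc (gdist V E u v)}"

definition sigma_max :: "'a set \<Rightarrow> ('a \<Rightarrow> 'a \<Rightarrow> bool) \<Rightarrow> ('a \<Rightarrow> 'a \<Rightarrow> int) \<Rightarrow> 'a \<Rightarrow> 'a \<Rightarrow> int" where
  "sigma_max V E sg u v = (if \<forall>p\<in>shortest_paths V E u v. walk_sign sg p = -1 then -1 else 1)"

definition sigma_min :: "'a set \<Rightarrow> ('a \<Rightarrow> 'a \<Rightarrow> bool) \<Rightarrow> ('a \<Rightarrow> 'a \<Rightarrow> int) \<Rightarrow> 'a \<Rightarrow> 'a \<Rightarrow> int" where
  "sigma_min V E sg u v = (if \<forall>p\<in>shortest_paths V E u v. walk_sign sg p = 1 then 1 else -1)"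

definition compatible :: "'a set \<Rightarrow> ('a \<Rightarrow> 'a \<Rightarrow> bool) \<Rightarrow> ('a \<Rightarrow> 'a \<Rightarrow> int) \<Rightarrow> bool" where
  "compatible V E sg \<longleftrightarrow> (\<forall>u\<in>V. \<forall>v\<in>V.
     sigma_max V E sg u v * int (gdist V E u v) = sigma_min V E sg u v * int (gdist V E u v))"

text \<open>Signed distance; for a compatible signed graph sigma_max u v is the common value sigma(uv).\<close>
definition signed_dist :: "'a set \<Rightarrow> ('a \<Rightarrow> 'a \<Rightarrow> bool) \<Rightarrow> ('a \<Rightarrow> 'a \<Rightarrow> int) \<Rightarrow> 'a \<Rightarrow> 'a \<Rightarrow> int" where
  "signed_dist V E sg u v = sigma_max V E sg u v * int (gdist V E u v)"

definition net_degree :: "'a set \<Rightarrow> ('a \<Rightarrow> 'a \<Rightarrow> bool) \<Rightarrow> ('a \<Rightarrow> 'a \<Rightarrow> int) \<Rightarrow> 'a \<Rightarrow> int" where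
  "net_degree V E sg v = int (card {w\<in>V. E v w \<and> sg v w = 1}) - int (card {w\<in>V. E v w \<and> sg v w = -1})"

definition nbhd :: "'a set \<Rightarrow> ('a \<Rightarrow> 'a \<Rightarrow> bool) \<Rightarrow> ('a \<Rightarrow> 'a \<Rightarrow> int) \<Rightarrow> nat \<Rightarrow> 'a \<Rightarrow> 'a set" where
  "nbhd V E sg k v = {u\<in>V. signed_dist V E sg u v = int k \<or> signed_dist V E sg u v = - int k}"

definition metric_rep :: "'a set \<Rightarrow> ('a \<Rightarrow> 'a \<Rightarrow> bool) \<Rightarrow> ('a \<Rightarrow> 'a \<Rightarrow> int) \<Rightarrow> 'a list \<Rightarrow> 'a \<Rightarrow> int list" where
  "metric_rep V E sg W v = map (\<lambda>w. signed_dist V E sg v w) W"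

definition resolving :: "'a set \<Rightarrow> ('a \<Rightarrow> 'a \<Rightarrow> bool) \<Rightarrow> ('a \<Rightarrow> 'a \<Rightarrow> int) \<Rightarrow> 'a list \<Rightarrow> bool" where
  "resolving V E sg W \<longleftrightarrow> distinct W \<and> set W \<subseteq> V \<and>
     (\<forall>u\<in>V. \<forall>v\<in>V. u \<noteq> v \<longrightarrow> metric_rep V E sg W u \<noteq> metric_rep V E sg W v)"

definition metric_dim :: "'a set \<Rightarrow> ('a \<Rightarrow> 'a \<Rightarrow> bool) \<Rightarrow> ('a \<Rightarrow> 'a \<Rightarrow> int) \<Rightarrow> nat" where
  "metric_dim V E sg = (LEAST k. \<exists>W. resolving V E sg W \<and> length W = k)"

definition cycle_adj :: "nat \<Rightarrow> nat \<Rightarrow> nat \<Rightarrow> bool" where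
  "cycle_adj n i j \<longleftrightarrow> i < n \<and> j < n \<and> (j = Suc i mod n \<or> i = Suc j mod n)"

end

theory Submission imports Defs begin

lemma ws_nil[simp]: "walk_sign sg [] = 1" by (simp add: walk_sign_def)
lemma ws_one[simp]: "walk_sign sg [a] = 1" by (simp add: walk_sign_def)
lemma ws_cons2[simp]: "walk_sign sg (a#b#xs) = sg a b * walk_sign sg (b#xs)"
  by (simp add: walk_sign_def)

lemma ws_snoc: "ys \<noteq> [] \<Longrightarrow> walk_sign sg (ys @ [a]) = walk_sign sg ys * sg (last ys) a"
proof (induction ys)
  case Nil then show ?case by simp
next
  case (Cons y ys)
  then show ?case by (cases ys) auto
qed

lemma ws_rev: "(\<forall>i. Suc i < length xs \<longrightarrow> sg (xs!i) (xs!Suc i) = sg (xs!Suc i) (xs!i))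
  \<Longrightarrow> walk_sign sg (rev xs) = walk_sign sg xs"
proof (induction xs)
  case Nil then show ?case by simp
next
  case (Cons x xs)
  have IH: "walk_sign sg (rev xs) = walk_sign sg xs"
    using Cons.prems by (intro Cons.IH) (metis Suc_less_eq length_Cons nth_Cons_Suc)
  show ?case
  proof (cases xs)
    case Nil then show ?thesis by simp
  next
    case (Cons b ys)
    have "sg x b = sg b x" using Cons.prems \<open>xs = b#ys\<close> by (metis length_Cons nth_Cons_0 nth_Cons_Suc zero_less_Suc Suc_less_eq)
    have "walk_sign sg (rev xs @ [x]) = walk_sign sg (rev xs) * sg (last (rev xs)) x"
      using Cons by (intro ws_snoc) simp
    then show ?thesis using IH Cons \<open>sg x b = sg b x\<close> by (simp add: last_rev)
  qed
qed

lemma walk_rev: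
  assumes "\<forall>a b. E a b \<longrightarrow> E b a" "is_walk V E u v xs"
  shows "is_walk V E v u (rev xs)"
  unfolding is_walk_def
proof (intro conjI allI impI)
  show "rev xs \<noteq> []" "hd (rev xs) = v" "last (rev xs) = u" "set (rev xs) \<subseteq> V"
    using assms(2) by (auto simp: is_walk_def hd_rev last_rev)
  fix i assume i: "Suc i < length (rev xs)"
  define j where "j = length xs - Suc (Suc i)"
  have "E (xs!j) (xs!Suc j)" using assms(2) i unfolding is_walk_def j_def by auto
  moreover have "rev xs ! i = xs ! Suc j" "rev xs ! Suc i = xs ! j"
    using i by (auto simp: rev_nth j_def Suc_diff_Suc)
  ultimately show "E (rev xs ! i) (rev xs ! Suc i)" using assms(1) by metis
qed

lemma gdist_sym:
  assumes "\<forall>a b. E a b \<longrightarrow> E b a"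
  shows "gdist V E u v = gdist V E v u"
proof -
  have "(\<lambda>k. \<exists>xs. is_walk V E u v xs \<and> length xs = Suc k) = (\<lambda>k. \<exists>xs. is_walk V E v u xs \<and> length xs = Suc k)"
    using walk_rev[OF assms] by (metis length_rev rev_rev_ident)
  then show ?thesis unfolding gdist_def by simp
qed

lemma gdist_le: "is_walk V E u v xs \<Longrightarrow> gdist V E u v \<le> length xs - 1"
  unfolding gdist_def by (rule Least_le) (metis Suc_diff_1 is_walk_def length_greater_0_conv)

lemma gdist_walk: "is_walk V E u v xs \<Longrightarrow> \<exists>ys. is_walk V E u v ys \<and> length ys = Suc (gdist V E u v)"
  unfolding gdist_def by (rule LeastI_ex) (metis Suc_diff_1 is_walk_def length_greater_0_conv)

lemma gdist_0: "is_walk V E u v xs \<Longrightarrow> gdist V E u v = 0 \<Longrightarrow> u = v"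
  using gdist_walk[of V E u v xs] by (auto simp: is_walk_def length_Suc_conv)

lemma gdist_refl: "u \<in> V \<Longrightarrow> gdist V E u u = 0"
  using gdist_le[of V E u u "[u]"] by (simp add: is_walk_def)

lemma sigma_max_sym:
  assumes "\<forall>a b. E a b \<longrightarrow> E b a" "\<forall>a b. E a b \<longrightarrow> sg a b = sg b a"
  shows "sigma_max V E sg u v = sigma_max V E sg v u"
proof -
  have sp: "shortest_paths V E v u = rev ` shortest_paths V E u v"
  proof
    show "shortest_paths V E v u \<subseteq> rev ` shortest_paths V E u v"
    proof
      fix p assume "p \<in> shortest_paths V E v u"
      then have "rev p \<in> shortest_paths V E u v"
        using walk_rev[OF assms(1)] gdist_sym[OF assms(1)] by (auto simp: shortest_paths_def)
      then show "p \<in> rev ` shortest_paths V E u v" by (metis image_eqI rev_rev_ident)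
    qed
    show "rev ` shortest_paths V E u v \<subseteq> shortest_paths V E v u"
      using walk_rev[OF assms(1)] gdist_sym[OF assms(1)] by (auto simp: shortest_paths_def)
  qed
  have "walk_sign sg (rev p) = walk_sign sg p" if "p \<in> shortest_paths V E u v" for p
  proof (rule ws_rev, intro allI impI)
    fix i assume "Suc i < length p"
    then have "E (p!i) (p!Suc i)" using that by (auto simp: shortest_paths_def is_walk_def)
    then show "sg (p!i) (p!Suc i) = sg (p!Suc i) (p!i)" using assms(2) by blast
  qed
  then show ?thesis unfolding sigma_max_def sp by auto
qed

lemma sigma_max_pm: "sigma_max V E sg u v = 1 \<or> sigma_max V E sg u v = -1"
  by (simp add: sigma_max_def)

lemma sigma_max_edge:
  assumes "E u v" "u \<noteq> v" "u \<in> V" "v \<in> V" "sg u v = 1 \<or> sg u v = -1"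
  shows "sigma_max V E sg u v = sg u v"
proof -
  have w: "is_walk V E u v [u,v]" using assms by (auto simp: is_walk_def nth_Cons split: nat.splits)
  have "gdist V E u v \<le> 1" "gdist V E u v \<noteq> 0" using gdist_le[OF w] gdist_0[OF w] assms(2) by auto
  then have g: "gdist V E u v = 1" by linarith
  have "shortest_paths V E u v = {[u,v]}"
  proof
    show "{[u,v]} \<subseteq> shortest_paths V E u v" using w g by (simp add: shortest_paths_def)
    show "shortest_paths V E u v \<subseteq> {[u,v]}"
    proof
      fix p assume "p \<in> shortest_paths V E u v"
      then have "is_walk V E u v p" "length p = 2" using g by (auto simp: shortest_paths_def)
      then show "p \<in> {[u,v]}" by (auto simp: is_walk_def length_Suc_conv numeral_2_eq_2)
    qed
  qed
  then show ?thesis using assms(5) by (auto simp: sigma_max_def)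
qed

lemma up_walk:
  assumes "a < n"
  shows "is_walk {..<n} (cycle_adj n) a ((a + j) mod n) (map (\<lambda>t. (a+t) mod n) [0..<Suc j])"
  using assms unfolding is_walk_def
  by (auto simp: cycle_adj_def hd_map last_map mod_Suc_eq simp del: upt_Suc)

lemma cyc_sym: "\<forall>a b. cycle_adj n a b \<longrightarrow> cycle_adj n b a"
  by (auto simp: cycle_adj_def)

lemma cyc_walk:
  assumes "u < n" "v < n"
  shows "\<exists>xs. is_walk {..<n} (cycle_adj n) v u xs \<and> length xs \<le> Suc (n div 2)"
proof -
  define j where "j = (u + n - v) mod n"
  have n0: "n > 0" using assms by auto
  have vj: "(v + j) mod n = u"
  proof -
    have "(v + j) mod n = (v + (u + n - v)) mod n" unfolding j_def by (simp add: mod_add_right_eq)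
    also have "\<dots> = (u + n) mod n" using assms by simp
    also have "\<dots> = u" using assms by simp
    finally show ?thesis .
  qed
  show ?thesis
  proof (cases "j \<le> n div 2")
    case True
    then show ?thesis using up_walk[OF assms(2), of j] vj by (intro exI[of _ "map (\<lambda>t. (v+t) mod n) [0..<Suc j]"]) auto
  next
    case False
    have jn: "j < n" using n0 j_def by auto
    have uj: "(u + (n - j)) mod n = v"
    proof -
      have "(u + (n - j)) mod n = ((v + j) mod n + (n - j)) mod n" using vj by simp
      also have "\<dots> = (v + j + (n - j)) mod n" by (simp add: mod_add_left_eq)
      also have "\<dots> = (v + n) mod n" using jn by simp
      also have "\<dots> = v" using assms by simp
      finally show ?thesis .
    qed
    define xs where "xs = map (\<lambda>t. (u+t) mod n) [0..<Suc (n-j)]"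
    have "is_walk {..<n} (cycle_adj n) u v xs"
      using up_walk[OF assms(1), of "n-j"] uj unfolding xs_def by simp
    then have "is_walk {..<n} (cycle_adj n) v u (rev xs)" by (rule walk_rev[OF cyc_sym])
    moreover have "length (rev xs) \<le> Suc (n div 2)" using False unfolding xs_def by simp
    ultimately show ?thesis by blast
  qed
qed

lemma cyc_gdist:
  assumes "u < n" "v < n"
  shows "gdist {..<n} (cycle_adj n) v u \<le> n div 2" "gdist {..<n} (cycle_adj n) v u = 0 \<longleftrightarrow> v = u"
  using cyc_walk[OF assms] gdist_le gdist_0 gdist_refl assms
  by (fastforce, metis lessThan_iff)

lemma cyc_nbrs:
  assumes "n \<ge> 3" "u < n"
  defines "a \<equiv> Suc u mod n" and "b \<equiv> (u + n - 1) mod n"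
  shows "a < n" "b < n" "a \<noteq> b" "a \<noteq> u" "b \<noteq> u" "cycle_adj n u a" "cycle_adj n u b"
    "\<And>w. cycle_adj n u w \<Longrightarrow> w = a \<or> w = b"
proof -
  have c: "(u = 0 \<and> a = 1 \<and> b = n - 1) \<or> (u = n - 1 \<and> a = 0 \<and> b = n - 2) \<or> (0 < u \<and> u < n - 1 \<and> a = u + 1 \<and> b = u - 1)"
    using assms by (cases "u = 0"; cases "u = n - 1") (auto simp: mod_if)
  then show "a < n" "b < n" "a \<noteq> b" "a \<noteq> u" "b \<noteq> u" using assms(1,2) by auto
  have sb: "Suc b mod n = u"
    using c
  proof (elim disjE conjE)
    assume "u = 0" "b = n - 1" then show ?thesis using assms(1) by simp
  next
    assume "u = n - 1" "b = n - 2" then show ?thesis using assms(1) by simp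
  next
    assume "0 < u" "u < n - 1" "b = u - 1" then show ?thesis by simp
  qed
  show "cycle_adj n u a" using assms(2) \<open>a < n\<close> by (simp add: cycle_adj_def a_def)
  show "cycle_adj n u b" using assms(2) \<open>b < n\<close> sb by (simp add: cycle_adj_def)
  fix w assume "cycle_adj n u w"
  then have w: "w < n" "w = a \<or> u = Suc w mod n" by (auto simp: cycle_adj_def a_def)
  show "w = a \<or> w = b"
  proof (cases "w = a")
    case False
    then have "u = Suc w mod n" using w by auto
    show ?thesis
    proof (cases "w = n - 1")
      case True
      then have "u = 0" using \<open>u = Suc w mod n\<close> assms(1) by simp
      then show ?thesis using c True by auto
    next
      case False
      then have "Suc w < n" using w(1) by linarith
      then have "u = Suc w" using \<open>u = Suc w mod n\<close> by simp
      then show ?thesis using c by auto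
    qed
  qed simp
qed

theorem theorem2p8:
  fixes n :: nat and sg :: "nat \<Rightarrow> nat \<Rightarrow> int"
  assumes "n \<ge> 3"
    and "\<forall>i j. cycle_adj n i j \<longrightarrow> sg i j = sg j i \<and> (sg i j = 1 \<or> sg i j = -1)"
    and "compatible {..<n} (cycle_adj n) sg"
  shows "metric_dim {..<n} (cycle_adj n) sg = 1 \<longleftrightarrow>
    (\<exists>u\<in>{..<n}. net_degree {..<n} (cycle_adj n) sg u = 0 \<and>
       (\<forall>k\<in>{1..n div 2}. \<forall>v\<in>nbhd {..<n} (cycle_adj n) sg k u. \<forall>w\<in>nbhd {..<n} (cycle_adj n) sg k u.
          v \<noteq> w \<longrightarrow> sigma_max {..<n} (cycle_adj n) sg u v \<noteq> sigma_max {..<n} (cycle_adj n) sg u w))"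
proof -
  define V where "V = {..<n}"
  define E where "E = cycle_adj n"
  have Esym: "\<forall>a b. E a b \<longrightarrow> E b a" unfolding E_def by (rule cyc_sym)
  have sgsym: "\<forall>a b. E a b \<longrightarrow> sg a b = sg b a" using assms(2) unfolding E_def by blast
  have smsym: "\<And>x y. sigma_max V E sg x y = sigma_max V E sg y x"
    by (rule sigma_max_sym[OF Esym sgsym])
  have sdef: "\<And>x y. signed_dist V E sg x y = sigma_max V E sg x y * int (gdist V E x y)"
    by (simp add: signed_dist_def)
  have gbound: "x \<in> V \<Longrightarrow> y \<in> V \<Longrightarrow> gdist V E x y \<le> n div 2" for x y
    unfolding V_def E_def using cyc_gdist(1)[of y n x] by simp
  have g0: "x \<in> V \<Longrightarrow> y \<in> V \<Longrightarrow> gdist V E x y = 0 \<longleftrightarrow> x = y" for x y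
    unfolding V_def E_def using cyc_gdist(2)[of y n x] by simp
  have pm: "\<And>x y. sigma_max V E sg x y = 1 \<or> sigma_max V E sg x y = -1" by (rule sigma_max_pm)
  have res1: "resolving V E sg [u] \<longleftrightarrow> u \<in> V \<and> (\<forall>v\<in>V. \<forall>w\<in>V. v \<noteq> w \<longrightarrow> signed_dist V E sg v u \<noteq> signed_dist V E sg w u)" for u
    by (simp add: resolving_def metric_rep_def)
  have nb: "x \<in> nbhd V E sg k u \<longleftrightarrow> x \<in> V \<and> int (gdist V E x u) = int k" for x k u
    using pm[of x u] by (auto simp: nbhd_def sdef)
  have main: "resolving V E sg [u] \<longleftrightarrow> u \<in> V \<and> (\<forall>k\<in>{1..n div 2}. \<forall>v\<in>nbhd V E sg k u. \<forall>w\<in>nbhd V E sg k u.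
          v \<noteq> w \<longrightarrow> sigma_max V E sg u v \<noteq> sigma_max V E sg u w)" for u
  proof
    assume r: "resolving V E sg [u]"
    then have uV: "u \<in> V" and inj: "\<And>v w. v\<in>V \<Longrightarrow> w\<in>V \<Longrightarrow> v \<noteq> w \<Longrightarrow> signed_dist V E sg v u \<noteq> signed_dist V E sg w u"
      using res1 by auto
    show "u \<in> V \<and> (\<forall>k\<in>{1..n div 2}. \<forall>v\<in>nbhd V E sg k u. \<forall>w\<in>nbhd V E sg k u.
          v \<noteq> w \<longrightarrow> sigma_max V E sg u v \<noteq> sigma_max V E sg u w)"
    proof (intro conjI ballI impI uV)
      fix k v w assume k: "k \<in> {1..n div 2}" and v: "v \<in> nbhd V E sg k u" and w: "w \<in> nbhd V E sg k u" and vw: "v \<noteq> w"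
      from v w have "v \<in> V" "w \<in> V" "gdist V E v u = k" "gdist V E w u = k" using nb by auto
      with inj[OF _ _ vw] have "sigma_max V E sg v u \<noteq> sigma_max V E sg w u" by (auto simp: sdef)
      then show "sigma_max V E sg u v \<noteq> sigma_max V E sg u w" using smsym by metis
    qed
  next
    assume h: "u \<in> V \<and> (\<forall>k\<in>{1..n div 2}. \<forall>v\<in>nbhd V E sg k u. \<forall>w\<in>nbhd V E sg k u.
          v \<noteq> w \<longrightarrow> sigma_max V E sg u v \<noteq> sigma_max V E sg u w)"
    then have uV: "u \<in> V" by blast
    show "resolving V E sg [u]" unfolding res1
    proof (intro conjI ballI impI uV)
      fix v w assume vV: "v \<in> V" and wV: "w \<in> V" and vw: "v \<noteq> w"
      show "signed_dist V E sg v u \<noteq> signed_dist V E sg w u"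
      proof
        assume eq: "signed_dist V E sg v u = signed_dist V E sg w u"
        have "\<bar>signed_dist V E sg x u\<bar> = int (gdist V E x u)" for x using pm[of x u] by (auto simp: sdef)
        then have gg: "gdist V E v u = gdist V E w u" using eq by (metis of_nat_eq_iff)
        show False
        proof (cases "gdist V E v u = 0")
          case True
          then show ?thesis using g0 vV wV uV gg vw by metis
        next
          case False
          define k where "k = gdist V E v u"
          have k: "k \<in> {1..n div 2}" using False gbound[OF vV uV] unfolding k_def by auto
          have "v \<in> nbhd V E sg k u" "w \<in> nbhd V E sg k u" using nb vV wV gg k_def by auto
          then have "sigma_max V E sg u v \<noteq> sigma_max V E sg u w" using h k vw by blast
          then have "sigma_max V E sg v u \<noteq> sigma_max V E sg w u" using smsym by metis
          moreover have "sigma_max V E sg v u * int k = sigma_max V E sg w u * int k"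
            using eq gg by (simp add: sdef k_def)
          ultimately show False using False k_def by simp
        qed
      qed
    qed
  qed
  have V2: "0 \<in> V" "1 \<in> V" using assms(1) by (auto simp: V_def)
  have len: "resolving V E sg W \<Longrightarrow> 1 \<le> length W" for W
    using V2 by (cases W) (auto simp: resolving_def metric_rep_def)
  have nd: "net_degree V E sg u = 0 \<longleftrightarrow> sg u (Suc u mod n) \<noteq> sg u ((u + n - 1) mod n)" if uV: "u \<in> V" for u
  proof -
    define a where "a = Suc u mod n"
    define b where "b = (u + n - 1) mod n"
    note nbr = cyc_nbrs[OF assms(1), of u, folded a_def b_def]
    have un: "u < n" using uV V_def by simp
    have N: "{w\<in>V. E u w} = {a, b}" using nbr[OF un] by (auto simp: V_def E_def)
    have sa: "sg u a = 1 \<or> sg u a = -1" "sg u b = 1 \<or> sg u b = -1"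
      using assms(2) nbr(6,7)[OF un] by blast+
    have P: "{w\<in>V. E u w \<and> sg u w = c} = {x\<in>{a,b}. sg u x = c}" for c using N by auto
    have Q: "{x\<in>{a,b}. sg u x = c} = (if sg u a = c then {a} else {}) \<union> (if sg u b = c then {b} else {})" for c
      by auto
    have ab: "a \<noteq> b" using nbr(3)[OF un] .
    show ?thesis unfolding net_degree_def P Q a_def[symmetric] b_def[symmetric]
      using sa ab by (elim disjE) auto
  qed
  have ndk: "net_degree V E sg u = 0" if uV: "u \<in> V" and
      h: "\<forall>k\<in>{1..n div 2}. \<forall>v\<in>nbhd V E sg k u. \<forall>w\<in>nbhd V E sg k u.
          v \<noteq> w \<longrightarrow> sigma_max V E sg u v \<noteq> sigma_max V E sg u w" for u
  proof -
    define a where "a = Suc u mod n"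
    define b where "b = (u + n - 1) mod n"
    note nbr = cyc_nbrs[OF assms(1), of u, folded a_def b_def]
    have un: "u < n" using uV V_def by simp
    have sa: "sg u a = 1 \<or> sg u a = -1" "sg u b = 1 \<or> sg u b = -1"
      using assms(2) nbr(6,7)[OF un] by blast+
    have ea: "sigma_max V E sg u a = sg u a" "sigma_max V E sg u b = sg u b"
      using sigma_max_edge[of E u a V sg] sigma_max_edge[of E u b V sg] nbr[OF un] sa un
      by (auto simp: V_def E_def)
    have "gdist V E a u = 1" "gdist V E b u = 1"
    proof -
      have wa: "is_walk V E a u [a,u]" "is_walk V E b u [b,u]"
        using nbr[OF un] un Esym by (auto simp: is_walk_def V_def E_def nth_Cons split: nat.splits)
      have "gdist V E a u \<le> 1" "gdist V E b u \<le> 1" using gdist_le[OF wa(1)] gdist_le[OF wa(2)] by auto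
      moreover have "gdist V E a u \<noteq> 0" "gdist V E b u \<noteq> 0" using gdist_0[OF wa(1)] gdist_0[OF wa(2)] nbr[OF un] by auto
      ultimately show "gdist V E a u = 1" "gdist V E b u = 1" by linarith+
    qed
    then have "a \<in> nbhd V E sg 1 u" "b \<in> nbhd V E sg 1 u" using nb nbr[OF un] by (auto simp: V_def)
    moreover have "(1::nat) \<in> {1..n div 2}" using assms(1) by auto
    ultimately have "sg u a \<noteq> sg u b" using h nbr(3)[OF un] ea by metis
    then show ?thesis using nd[OF uV] a_def b_def by simp
  qed
  have ex: "resolving V E sg [0..<n]"
    unfolding resolving_def
  proof (intro conjI ballI impI)
    show "distinct [0..<n]" "set [0..<n] \<subseteq> V" by (auto simp: V_def)
    fix u v assume uV: "u \<in> V" and vV: "v \<in> V" and uv: "u \<noteq> v"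
    have un: "u < n" using uV V_def by simp
    have "metric_rep V E sg [0..<n] u ! u = 0" using un g0[OF uV uV] by (simp add: metric_rep_def sdef)
    moreover have "metric_rep V E sg [0..<n] v ! u \<noteq> 0" using un g0[OF vV uV] uv pm[of v u]
      by (auto simp: metric_rep_def sdef)
    ultimately show "metric_rep V E sg [0..<n] u \<noteq> metric_rep V E sg [0..<n] v" by metis
  qed
  have "metric_dim V E sg = 1 \<longleftrightarrow> (\<exists>u. resolving V E sg [u])"
  proof
    assume d: "metric_dim V E sg = 1"
    have "\<exists>W. resolving V E sg W \<and> length W = metric_dim V E sg"
      unfolding metric_dim_def by (rule LeastI_ex) (use ex in blast)
    then obtain W where "resolving V E sg W" "length W = 1" using d by auto
    then show "\<exists>u. resolving V E sg [u]" by (metis One_nat_def length_0_conv length_Suc_conv)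
  next
    assume "\<exists>u. resolving V E sg [u]"
    then obtain u where "resolving V E sg [u]" by blast
    then show "metric_dim V E sg = 1" unfolding metric_dim_def
      by (intro Least_equality) (use len in force)+
  qed
  then show ?thesis unfolding V_def[symmetric] E_def[symmetric] main using ndk by blast
qed

end
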